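(* Let $d$ be a positive integer and $H$ a complex Hilbert space. Let $T=(T_1,\ldots,T_d)$ be a commuting operator-valued multishift on $\ell^2_H(\mathbb N^d)$ with unitary operator weights $\{A^{(j)}_\alpha:\alpha\in\mathbb N^d,\ j=1,\ldots,d\}$. Then $T$ satisfies the von Neumann's inequality, i.e. $\|p(T)\|\le\sup_{z\in\mathbb D^d}|p(z)|$ for every polynomial $p\in\mathbb C[z_1,\ldots,z_d]$.
   Context: $\mathbb N$ denotes the nonnegative integers; $\varepsilon_j\in\mathbb N^d$ has $1$ in the $j$-th place and $0$ elsewhere; $\mathbb D^d$ is the open unit polydisc. $\ell^2_H(\mathbb N^d)=\bigoplus_{\alpha\in\mathbb N^d}H$. Given bounded operators $A^{(j)}_\alpha:H\to H$, the operator-valued multishift with these operator weights is the $d$-tuple defined by $T_j(\oplus_\alpha x_\alpha)=\oplus_\alpha A^{(j)}_{\alpha-\varepsilon_j}x_{\alpha-\varepsilon_j}$ (the term being $0$ when $\alpha_j=0$). It is a commuting operator-valued multishift if $\sup_\alpha\|A^{(j)}_\alpha\|<\infty$ for each $j$ and $A^{(i)}_{\alpha+\varepsilon_j}A^{(j)}_\alpha=A^{(j)}_{\alpha+\varepsilon_i}A^{(i)}_\alpha$ for all $\alpha$ and all $i,j$. For $p(z)=\sum a_\alpha z^\alpha$, $p(T)=\sum a_\alpha T_1^{\alpha_1}\cdots T_d^{\alpha_d}$. *)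

theory Defs
  imports "HOL-Analysis.Analysis"
begin

text \<open>A complex Hilbert space: an abelian group 'h together with a complex scalar
multiplication sm and an inner product ip (linear in the first argument),
complete w.r.t. the induced norm.\<close>

definition hnorm :: "('h \<Rightarrow> 'h \<Rightarrow> complex) \<Rightarrow> 'h \<Rightarrow> real" where
  "hnorm ip x = sqrt (Re (ip x x))"

definition complex_hilbert_space ::
  "(complex \<Rightarrow> 'h::ab_group_add \<Rightarrow> 'h) \<Rightarrow> ('h \<Rightarrow> 'h \<Rightarrow> complex) \<Rightarrow> bool" where
  "complex_hilbert_space sm ip \<longleftrightarrow>
     (\<forall>x. sm 1 x = x) \<and>
     (\<forall>a b x. sm a (sm b x) = sm (a * b) x) \<and>
     (\<forall>a x y. sm a (x + y) = sm a x + sm a y) \<and>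
     (\<forall>a b x. sm (a + b) x = sm a x + sm b x) \<and>
     (\<forall>x y z. ip (x + y) z = ip x z + ip y z) \<and>
     (\<forall>a x y. ip (sm a x) y = a * ip x y) \<and>
     (\<forall>x y. ip y x = cnj (ip x y)) \<and>
     (\<forall>x. 0 \<le> Re (ip x x)) \<and>
     (\<forall>x. ip x x = 0 \<longrightarrow> x = 0) \<and>
     (\<forall>X :: nat \<Rightarrow> 'h.
        (\<forall>e>0. \<exists>N. \<forall>m\<ge>N. \<forall>n\<ge>N. hnorm ip (X m - X n) < e) \<longrightarrow>
        (\<exists>L. (\<lambda>n. hnorm ip (X n - L)) \<longlonglongrightarrow> 0))"

definition clinear_op :: "(complex \<Rightarrow> 'h::ab_group_add \<Rightarrow> 'h) \<Rightarrow> ('h \<Rightarrow> 'h) \<Rightarrow> bool" where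
  "clinear_op sm L \<longleftrightarrow> (\<forall>x y. L (x + y) = L x + L y) \<and> (\<forall>a x. L (sm a x) = sm a (L x))"

definition unitary_op ::
  "(complex \<Rightarrow> 'h::ab_group_add \<Rightarrow> 'h) \<Rightarrow> ('h \<Rightarrow> 'h \<Rightarrow> complex) \<Rightarrow> ('h \<Rightarrow> 'h) \<Rightarrow> bool" where
  "unitary_op sm ip U \<longleftrightarrow> clinear_op sm U \<and> surj U \<and> (\<forall>x y. ip (U x) (U y) = ip x y)"

text \<open>Multi-indices in N^d, represented as functions nat \<Rightarrow> nat vanishing from d on;
 coordinates are indexed 0..d-1.\<close>

definition multi_idx :: "nat \<Rightarrow> (nat \<Rightarrow> nat) set" where
  "multi_idx d = {\<alpha>. \<forall>j\<ge>d. \<alpha> j = 0}"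

definition l2H :: "nat \<Rightarrow> ('h::ab_group_add \<Rightarrow> 'h \<Rightarrow> complex) \<Rightarrow> ((nat \<Rightarrow> nat) \<Rightarrow> 'h) set" where
  "l2H d ip = {x. (\<forall>\<alpha>. \<alpha> \<notin> multi_idx d \<longrightarrow> x \<alpha> = 0) \<and>
                  (\<lambda>\<alpha>. (hnorm ip (x \<alpha>))\<^sup>2) summable_on multi_idx d}"

definition l2norm :: "nat \<Rightarrow> ('h \<Rightarrow> 'h \<Rightarrow> complex) \<Rightarrow> ((nat \<Rightarrow> nat) \<Rightarrow> 'h) \<Rightarrow> real" where
  "l2norm d ip x = sqrt (\<Sum>\<^sub>\<infinity>\<alpha>\<in>multi_idx d. (hnorm ip (x \<alpha>))\<^sup>2)"

definition multishift ::
  "nat \<Rightarrow> (nat \<Rightarrow> (nat \<Rightarrow> nat) \<Rightarrow> 'h \<Rightarrow> 'h) \<Rightarrow> nat \<Rightarrow> ((nat \<Rightarrow> nat) \<Rightarrow> 'h::zero) \<Rightarrow> ((nat \<Rightarrow> nat) \<Rightarrow> 'h)" where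
  "multishift d A j x = (\<lambda>\<alpha>. if \<alpha> \<in> multi_idx d \<and> j < d \<and> 0 < \<alpha> j
       then A j (\<alpha>(j := \<alpha> j - 1)) (x (\<alpha>(j := \<alpha> j - 1))) else 0)"

definition commuting_weights ::
  "nat \<Rightarrow> ('h::ab_group_add \<Rightarrow> 'h \<Rightarrow> complex) \<Rightarrow> (nat \<Rightarrow> (nat \<Rightarrow> nat) \<Rightarrow> 'h \<Rightarrow> 'h) \<Rightarrow> bool" where
  "commuting_weights d ip A \<longleftrightarrow>
     (\<forall>j<d. \<exists>M. \<forall>\<alpha>\<in>multi_idx d. \<forall>x. hnorm ip (A j \<alpha> x) \<le> M * hnorm ip x) \<and>
     (\<forall>\<alpha>\<in>multi_idx d. \<forall>i<d. \<forall>j<d.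
        A i (\<alpha>(j := \<alpha> j + 1)) \<circ> A j \<alpha> = A j (\<alpha>(i := \<alpha> i + 1)) \<circ> A i \<alpha>)"

text \<open>Polynomials in d variables: finitely supported coefficient functions on multi-indices.\<close>

definition is_poly :: "nat \<Rightarrow> ((nat \<Rightarrow> nat) \<Rightarrow> complex) \<Rightarrow> bool" where
  "is_poly d c \<longleftrightarrow> finite {\<alpha>. c \<alpha> \<noteq> 0} \<and> {\<alpha>. c \<alpha> \<noteq> 0} \<subseteq> multi_idx d"

definition poly_eval :: "nat \<Rightarrow> ((nat \<Rightarrow> nat) \<Rightarrow> complex) \<Rightarrow> (nat \<Rightarrow> complex) \<Rightarrow> complex" where
  "poly_eval d c z = (\<Sum>\<alpha>\<in>{\<alpha>. c \<alpha> \<noteq> 0}. c \<alpha> * (\<Prod>j<d. z j ^ \<alpha> j))"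

definition polydisc :: "nat \<Rightarrow> (nat \<Rightarrow> complex) set" where
  "polydisc d = {z. (\<forall>j<d. cmod (z j) < 1) \<and> (\<forall>j\<ge>d. z j = 0)}"

primrec mono_op :: "(nat \<Rightarrow> 'a \<Rightarrow> 'a) \<Rightarrow> (nat \<Rightarrow> nat) \<Rightarrow> nat \<Rightarrow> 'a \<Rightarrow> 'a" where
  "mono_op T \<alpha> 0 = id"
| "mono_op T \<alpha> (Suc k) = mono_op T \<alpha> k \<circ> (T k ^^ \<alpha> k)"

definition poly_op ::
  "nat \<Rightarrow> (complex \<Rightarrow> 'h::ab_group_add \<Rightarrow> 'h) \<Rightarrow> ((nat \<Rightarrow> nat) \<Rightarrow> complex) \<Rightarrow>
   (nat \<Rightarrow> ((nat \<Rightarrow> nat) \<Rightarrow> 'h) \<Rightarrow> ((nat \<Rightarrow> nat) \<Rightarrow> 'h)) \<Rightarrow>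
   ((nat \<Rightarrow> nat) \<Rightarrow> 'h) \<Rightarrow> ((nat \<Rightarrow> nat) \<Rightarrow> 'h)" where
  "poly_op d sm c T x = (\<lambda>\<beta>. \<Sum>\<alpha>\<in>{\<alpha>. c \<alpha> \<noteq> 0}. sm (c \<alpha>) (mono_op T \<alpha> d x \<beta>))"

end

theory Submission
  imports Defs "HOL-Library.FuncSet" "HOL-Library.Function_Algebras"
begin

locale hs =
  fixes sm :: "complex \<Rightarrow> 'h::ab_group_add \<Rightarrow> 'h" and ip :: "'h \<Rightarrow> 'h \<Rightarrow> complex"
  assumes H: "complex_hilbert_space sm ip"
begin

lemma sm_one: "sm 1 x = x" using H unfolding complex_hilbert_space_def by (elim conjE) (erule allE)+
lemma sm_assoc: "sm a (sm b x) = sm (a * b) x" using H unfolding complex_hilbert_space_def by (elim conjE) (erule allE)+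
lemma sm_add_right: "sm a (x + y) = sm a x + sm a y" using H unfolding complex_hilbert_space_def by (elim conjE) (erule allE)+
lemma sm_add_left: "sm (a + b) x = sm a x + sm b x" using H unfolding complex_hilbert_space_def by (elim conjE) (erule allE)+
lemma ip_add_left: "ip (x + y) z = ip x z + ip y z" using H unfolding complex_hilbert_space_def by (elim conjE) (erule allE)+
lemma ip_sm_left: "ip (sm a x) y = a * ip x y" using H unfolding complex_hilbert_space_def by (elim conjE) (erule allE)+
lemma ip_conj: "ip y x = cnj (ip x y)" using H unfolding complex_hilbert_space_def by (elim conjE) (erule allE)+
lemma ip_nonneg: "0 \<le> Re (ip x x)" using H unfolding complex_hilbert_space_def by (elim conjE) (erule allE)+

lemma sm_zero_right[simp]: "sm a 0 = 0"
  using sm_add_right[of a 0 0] by simp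
lemma sm_zero_left[simp]: "sm 0 x = 0"
  using sm_add_left[of 0 0 x] by simp
lemma sm_sum_right: "sm a (sum f S) = (\<Sum>i\<in>S. sm a (f i))"
  by (induction S rule: infinite_finite_induct) (auto simp: sm_add_right)
lemma sm_sum_left: "sm (sum f S) x = (\<Sum>i\<in>S. sm (f i) x)"
  by (induction S rule: infinite_finite_induct) (auto simp: sm_add_left)
lemma ip_zero_left[simp]: "ip 0 y = 0"
  using ip_add_left[of 0 0 y] by simp
lemma ip_sum_left: "ip (sum f S) y = (\<Sum>i\<in>S. ip (f i) y)"
  by (induction S rule: infinite_finite_induct) (auto simp: ip_add_left)
lemma ip_sum_right: "ip y (sum f S) = (\<Sum>i\<in>S. ip y (f i))"
proof -
  have "ip y (sum f S) = cnj (ip (sum f S) y)" by (rule ip_conj)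
  also have "\<dots> = (\<Sum>i\<in>S. cnj (ip (f i) y))" by (simp add: ip_sum_left)
  also have "\<dots> = (\<Sum>i\<in>S. ip y (f i))" by (simp add: ip_conj[of y])
  finally show ?thesis .
qed
lemma ip_sm_right: "ip x (sm a y) = cnj a * ip x y"
  using ip_conj[of x "sm a y"] ip_sm_left[of a y x] ip_conj[of x y] by simp

lemma hnorm_sq: "(hnorm ip x)^2 = Re (ip x x)"
  unfolding hnorm_def using ip_nonneg by simp

lemma nsq_sm: "Re (ip (sm a x) (sm a x)) = (cmod a)^2 * Re (ip x x)"
proof -
  have "ip (sm a x) (sm a x) = (a * cnj a) * ip x x"
    by (simp add: ip_sm_left ip_sm_right)
  also have "a * cnj a = complex_of_real ((cmod a)^2)" using complex_norm_square[of a] by simp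
  finally show ?thesis by simp
qed

end

lemma unitary_props:
  assumes "unitary_op sm ip U"
  shows "U 0 = 0" "U (x + y) = U x + U y" "U (sm a x) = sm a (U x)"
    "hnorm ip (U x) = hnorm ip x" "surj U"
proof -
  show a: "U (x + y) = U x + U y" "U (sm a x) = sm a (U x)" "surj U"
    using assms unfolding unitary_op_def clinear_op_def by auto
  show "U 0 = 0" using assms unfolding unitary_op_def clinear_op_def
    by (metis add_0 add_cancel_right_right)
  show "hnorm ip (U x) = hnorm ip x" using assms unfolding unitary_op_def hnorm_def by simp
qed

lemma unitary_sum:
  assumes "unitary_op sm ip U"
  shows "U (sum f S) = (\<Sum>i\<in>S. U (f i))"
  by (induction S rule: infinite_finite_induct) (auto simp: unitary_props[OF assms])

definition lj :: "nat \<Rightarrow> (nat\<Rightarrow>nat) \<Rightarrow> nat" where "lj d \<beta> = (LEAST j. j<d \<and> 0<\<beta> j)"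
definition dec :: "nat \<Rightarrow> (nat\<Rightarrow>nat) \<Rightarrow> (nat\<Rightarrow>nat)" where "dec j \<beta> = \<beta>(j := \<beta> j - 1)"

lemma lj_props:
  assumes "\<exists>j<d. 0<\<beta> j"
  shows "lj d \<beta> < d" "0 < \<beta> (lj d \<beta>)" "\<And>i. i < lj d \<beta> \<Longrightarrow> \<beta> i = 0"
proof -
  from assms obtain j where "j<d \<and> 0<\<beta> j" by blast
  then have "lj d \<beta> < d \<and> 0 < \<beta> (lj d \<beta>)" unfolding lj_def by (rule LeastI)
  then show "lj d \<beta> < d" "0 < \<beta> (lj d \<beta>)" by auto
  fix i assume "i < lj d \<beta>"
  then have "\<not> (i<d \<and> 0<\<beta> i)" unfolding lj_def by (rule not_less_Least)
  with \<open>i < lj d \<beta>\<close> \<open>lj d \<beta> < d\<close> show "\<beta> i = 0" by auto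
qed

lemma dec_sum_less:
  assumes "\<exists>j<d. 0<\<beta> j"
  shows "(\<Sum>j<d. dec (lj d \<beta>) \<beta> j) < (\<Sum>j<d. \<beta> j)"
  using lj_props[OF assms]
  by (intro sum_strict_mono_ex1) (auto simp: dec_def intro!: bexI[of _ "lj d \<beta>"])

function Uw :: "nat \<Rightarrow> (nat \<Rightarrow> (nat \<Rightarrow> nat) \<Rightarrow> 'h \<Rightarrow> 'h) \<Rightarrow> (nat \<Rightarrow> nat) \<Rightarrow> 'h \<Rightarrow> 'h" where
  "Uw d A \<beta> = (if \<exists>j<d. 0<\<beta> j then A (lj d \<beta>) (dec (lj d \<beta>) \<beta>) \<circ> Uw d A (dec (lj d \<beta>) \<beta>) else id)"
  by auto
termination
  by (relation "Wellfounded.measure (\<lambda>(d,A,\<beta>). \<Sum>j<d. \<beta> j)") (auto intro: dec_sum_less)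

declare Uw.simps[simp del]

lemma Uw_step: "\<exists>j<d. 0<\<beta> j \<Longrightarrow> Uw d A \<beta> = A (lj d \<beta>) (dec (lj d \<beta>) \<beta>) \<circ> Uw d A (dec (lj d \<beta>) \<beta>)"
  by (subst Uw.simps, erule if_P)
lemma Uw_base: "\<not>(\<exists>j<d. 0<\<beta> j) \<Longrightarrow> Uw d A \<beta> = id"
  by (subst Uw.simps, erule if_not_P)

lemma multi_idx_upd: "j < d \<Longrightarrow> (\<beta>(j := n) \<in> multi_idx d) = (\<beta> \<in> multi_idx d)"
  unfolding multi_idx_def by auto

lemma Uw_key:
  assumes comm: "\<And>\<alpha> i j. \<alpha> \<in> multi_idx d \<Longrightarrow> i < d \<Longrightarrow> j < d \<Longrightarrow>
        A i (\<alpha>(j := \<alpha> j + 1)) \<circ> A j \<alpha> = A j (\<alpha>(i := \<alpha> i + 1)) \<circ> A i \<alpha>"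
  shows "\<beta> \<in> multi_idx d \<Longrightarrow> j < d \<Longrightarrow> A j \<beta> \<circ> Uw d A \<beta> = Uw d A (\<beta>(j := \<beta> j + 1))"
proof (induction "\<Sum>j<d. \<beta> j" arbitrary: \<beta> rule: less_induct)
  case less
  define b where "b = \<beta>(j := \<beta> j + 1)"
  have bj: "b j = \<beta> j + 1" and bi: "\<And>i. i \<noteq> j \<Longrightarrow> b i = \<beta> i" unfolding b_def by auto
  have ex': "\<exists>i<d. 0 < b i" using less.prems bj by (intro exI[of _ j]) auto
  have lb: "lj d b < d" "0 < b (lj d b)" "\<And>i. i < lj d b \<Longrightarrow> b i = 0" using lj_props[OF ex'] by auto
  have lbj: "lj d b \<le> j" unfolding lj_def using less.prems bj by (intro Least_le) auto
  have decj: "dec j b = \<beta>" unfolding dec_def b_def by auto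
  have Ub: "Uw d A b = A (lj d b) (dec (lj d b) b) \<circ> Uw d A (dec (lj d b) b)" by (rule Uw_step[OF ex'])
  have "A j \<beta> \<circ> Uw d A \<beta> = Uw d A b"
  proof (cases "\<exists>i<d. 0<\<beta> i")
    case False
    have "lj d b = j"
    proof (rule ccontr)
      assume "lj d b \<noteq> j"
      then show False using lb bi False lbj by (metis le_less_trans less_le)
    qed
    then show ?thesis using Ub Uw_base[OF False, of A] decj by simp
  next
    case True
    define m where "m = lj d \<beta>"
    have m: "m < d" "0 < \<beta> m" "\<And>i. i < m \<Longrightarrow> \<beta> i = 0" using lj_props[OF True] m_def by auto
    have UB: "Uw d A \<beta> = A m (dec m \<beta>) \<circ> Uw d A (dec m \<beta>)" using Uw_step[OF True] m_def by simp
    show ?thesis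
    proof (cases "j \<le> m")
      case True
      have "lj d b = j"
      proof (rule ccontr)
        assume "lj d b \<noteq> j"
        then have "lj d b < j" using lbj by simp
        then show False using lb bi m True by (metis less_le_trans less_not_refl)
      qed
      then show ?thesis using Ub decj by simp
    next
      case False
      have "lj d b = m"
      proof -
        have "lj d b \<le> m" unfolding lj_def using m False bi by (intro Least_le) auto
        moreover have "\<not> lj d b < m" using lb(2) m(3) bi False
          by (metis le_less_trans less_imp_neq nat_le_linear not_less0)
        ultimately show ?thesis by simp
      qed
      define \<gamma> where "\<gamma> = dec m \<beta>"
      have g: "\<gamma> \<in> multi_idx d" using less.prems m unfolding \<gamma>_def dec_def by (simp add: multi_idx_upd)
      have decb: "dec m b = \<gamma>(j := \<gamma> j + 1)" using False unfolding \<gamma>_def dec_def b_def by auto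
      have bg: "\<gamma>(m := \<gamma> m + 1) = \<beta>" using m unfolding \<gamma>_def dec_def by auto
      have IH: "A j \<gamma> \<circ> Uw d A \<gamma> = Uw d A (\<gamma>(j := \<gamma> j + 1))"
        using less.hyps[of \<gamma>] dec_sum_less[OF True] g less.prems m_def unfolding \<gamma>_def by simp
      have "Uw d A b = A m (\<gamma>(j := \<gamma> j + 1)) \<circ> Uw d A (\<gamma>(j := \<gamma> j + 1))"
        using Ub \<open>lj d b = m\<close> decb by simp
      also have "\<dots> = (A m (\<gamma>(j := \<gamma> j + 1)) \<circ> A j \<gamma>) \<circ> Uw d A \<gamma>" using IH by (simp add: comp_assoc)
      also have "\<dots> = (A j (\<gamma>(m := \<gamma> m + 1)) \<circ> A m \<gamma>) \<circ> Uw d A \<gamma>"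
        using comm[OF g m(1) less.prems(2)] by simp
      also have "\<dots> = A j \<beta> \<circ> Uw d A \<beta>" using bg UB \<gamma>_def by (simp add: comp_assoc)
      finally show ?thesis by simp
    qed
  qed
  then show ?case by (simp add: b_def)
qed

lemma unitary_id: "unitary_op sm ip id"
  unfolding unitary_op_def clinear_op_def by simp

lemma unitary_comp: "unitary_op sm ip U \<Longrightarrow> unitary_op sm ip V \<Longrightarrow> unitary_op sm ip (U \<circ> V)"
  unfolding unitary_op_def clinear_op_def using comp_surj[of V U] by auto

lemma Uw_unitary:
  assumes U: "\<And>j \<alpha>. j < d \<Longrightarrow> \<alpha> \<in> multi_idx d \<Longrightarrow> unitary_op sm ip (A j \<alpha>)"
  shows "\<beta> \<in> multi_idx d \<Longrightarrow> unitary_op sm ip (Uw d A \<beta>)"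
proof (induction "\<Sum>j<d. \<beta> j" arbitrary: \<beta> rule: less_induct)
  case less
  show ?case
  proof (cases "\<exists>j<d. 0<\<beta> j")
    case False
    then show ?thesis using Uw_base[OF False, of A] unitary_id[of sm ip] by simp
  next
    case True
    let ?m = "lj d \<beta>"
    have m: "?m < d" using lj_props[OF True] by auto
    have g: "dec ?m \<beta> \<in> multi_idx d" using less.prems m unfolding dec_def by (simp add: multi_idx_upd)
    have u1: "unitary_op sm ip (Uw d A (dec ?m \<beta>))" using less.hyps[OF dec_sum_less[OF True] g] .
    have u2: "unitary_op sm ip (A ?m (dec ?m \<beta>))" using U[OF m g] .
    show ?thesis using Uw_step[OF True, of A] unitary_comp[OF u2 u1] by simp
  qed
qed

definition Wm :: "nat \<Rightarrow> (nat \<Rightarrow> (nat \<Rightarrow> nat) \<Rightarrow> 'h \<Rightarrow> 'h) \<Rightarrow> ((nat \<Rightarrow> nat) \<Rightarrow> 'h) \<Rightarrow> ((nat \<Rightarrow> nat) \<Rightarrow> 'h)" where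
  "Wm d A y = (\<lambda>\<beta>. if \<beta> \<in> multi_idx d then Uw d A \<beta> (y \<beta>) else y \<beta>)"

abbreviation Sh :: "nat \<Rightarrow> nat \<Rightarrow> ((nat \<Rightarrow> nat) \<Rightarrow> 'h::zero) \<Rightarrow> ((nat \<Rightarrow> nat) \<Rightarrow> 'h)" where
  "Sh d \<equiv> multishift d (\<lambda>_ _ x. x)"

locale setting =
  fixes d :: nat and sm :: "complex \<Rightarrow> 'h::ab_group_add \<Rightarrow> 'h" and ip and A
  assumes U: "\<And>j \<alpha>. j < d \<Longrightarrow> \<alpha> \<in> multi_idx d \<Longrightarrow> unitary_op sm ip (A j \<alpha>)"
    and comm: "\<And>\<alpha> i j. \<alpha> \<in> multi_idx d \<Longrightarrow> i < d \<Longrightarrow> j < d \<Longrightarrow>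
        A i (\<alpha>(j := \<alpha> j + 1)) \<circ> A j \<alpha> = A j (\<alpha>(i := \<alpha> i + 1)) \<circ> A i \<alpha>"
begin

lemma UwU: "\<beta> \<in> multi_idx d \<Longrightarrow> unitary_op sm ip (Uw d A \<beta>)"
  by (rule Uw_unitary[where A=A and d=d, OF U])

lemma T_W: "multishift d A j (Wm d A y) = Wm d A (Sh d j y)"
proof
  fix \<alpha>
  show "multishift d A j (Wm d A y) \<alpha> = Wm d A (Sh d j y) \<alpha>"
  proof (cases "\<alpha> \<in> multi_idx d \<and> j < d \<and> 0 < \<alpha> j")
    case True
    define a where "a = \<alpha>(j := \<alpha> j - 1)"
    have a: "a \<in> multi_idx d" using True by (simp add: a_def multi_idx_upd)
    have aa: "a(j := a j + 1) = \<alpha>" using True by (auto simp: a_def)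
    have "A j a \<circ> Uw d A a = Uw d A \<alpha>" using Uw_key[OF comm a, of j] True aa by simp
    then have "A j a (Uw d A a (y a)) = Uw d A \<alpha> (y a)" by (metis comp_apply)
    then show ?thesis using True a unfolding multishift_def Wm_def a_def[symmetric] by simp
  next
    case False
    then show ?thesis unfolding multishift_def Wm_def
      using unitary_props(1)[OF UwU] by auto
  qed
qed

lemma T_W_pow: "(multishift d A j ^^ n) (Wm d A y) = Wm d A ((Sh d j ^^ n) y)"
  by (induction n) (auto simp: T_W)

lemma mono_W: "mono_op (multishift d A) \<alpha> k (Wm d A y) = Wm d A (mono_op (Sh d) \<alpha> k y)"
  by (induction k arbitrary: y) (auto simp: T_W_pow)

lemma poly_W:
  assumes "\<beta> \<in> multi_idx d"
  shows "poly_op d sm c (multishift d A) (Wm d A y) \<beta> = Uw d A \<beta> (poly_op d sm c (Sh d) y \<beta>)"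
  unfolding poly_op_def mono_W using assms
  by (simp add: Wm_def unitary_sum[OF UwU[OF assms]] unitary_props(3)[OF UwU[OF assms]])

lemma l2norm_W: "l2norm d ip (poly_op d sm c (multishift d A) (Wm d A y)) = l2norm d ip (poly_op d sm c (Sh d) y)"
  unfolding l2norm_def
  by (intro arg_cong[where f=sqrt] infsum_cong) (simp add: poly_W unitary_props(4)[OF UwU])

lemma W_surj:
  assumes "x \<in> l2H d ip"
  obtains y where "Wm d A y = x" "y \<in> l2H d ip" "l2norm d ip y = l2norm d ip x"
proof -
  define y where "y = (\<lambda>\<beta>. if \<beta> \<in> multi_idx d then inv (Uw d A \<beta>) (x \<beta>) else x \<beta>)"
  have inv: "\<beta> \<in> multi_idx d \<Longrightarrow> Uw d A \<beta> (y \<beta>) = x \<beta>" for \<beta>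
    unfolding y_def using unitary_props(5)[OF UwU] by (simp add: surj_f_inv_f)
  have n: "\<beta> \<in> multi_idx d \<Longrightarrow> hnorm ip (y \<beta>) = hnorm ip (x \<beta>)" for \<beta>
    using inv unitary_props(4)[OF UwU] by metis
  have "Wm d A y = x" unfolding Wm_def using inv by (auto simp: y_def)
  moreover have "y \<in> l2H d ip" using assms
    summable_on_cong[of "multi_idx d" "\<lambda>\<alpha>. (hnorm ip (y \<alpha>))^2" "\<lambda>\<alpha>. (hnorm ip (x \<alpha>))^2"] n
    unfolding l2H_def by (auto simp: y_def)
  moreover have "l2norm d ip y = l2norm d ip x" unfolding l2norm_def
    by (intro arg_cong[where f=sqrt] infsum_cong) (simp add: n)
  ultimately show ?thesis using that by blast
qed

end

definition VV :: "nat \<Rightarrow> ((nat \<Rightarrow> nat) \<Rightarrow> 'h::zero) set" where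
  "VV d = {y. \<forall>\<beta>. \<beta> \<notin> multi_idx d \<longrightarrow> y \<beta> = 0}"

lemma Sh_V: "Sh d j y \<in> VV d"
  unfolding VV_def multishift_def by auto

lemma Sh_pow_V: "y \<in> VV d \<Longrightarrow> (Sh d j ^^ n) y \<in> VV d"
  by (induction n) (auto simp: Sh_V)

lemma Sh_pow:
  assumes "j < d" "y \<in> VV d"
  shows "(Sh d j ^^ n) y \<beta> = (if n \<le> \<beta> j then y (\<beta>(j := \<beta> j - n)) else 0)"
proof (induction n arbitrary: \<beta>)
  case 0
  then show ?case by simp
next
  case (Suc n)
  show ?case
  proof (cases "\<beta> \<in> multi_idx d")
    case True
    then show ?thesis using Suc assms(1) by (auto simp: multishift_def multi_idx_upd) (auto simp: fun_upd_def)
  next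
    case False
    have "\<beta>(j := \<beta> j - Suc n) \<notin> multi_idx d" using False assms(1) by (simp add: multi_idx_upd)
    then show ?thesis using False assms(2) by (auto simp: multishift_def VV_def)
  qed
qed

lemma mono_S:
  assumes "y \<in> VV d" "k \<le> d"
  shows "mono_op (Sh d) \<alpha> k y \<beta> =
     (if \<forall>j<k. \<alpha> j \<le> \<beta> j then y (\<lambda>i. if i < k then \<beta> i - \<alpha> i else \<beta> i) else 0)"
  using assms
proof (induction k arbitrary: y \<beta>)
  case 0
  then show ?case by simp
next
  case (Suc k)
  let ?y = "(Sh d k ^^ \<alpha> k) y"
  have yV: "?y \<in> VV d" using Sh_pow_V Suc.prems by blast
  have "mono_op (Sh d) \<alpha> (Suc k) y \<beta> = mono_op (Sh d) \<alpha> k ?y \<beta>" by simp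
  also have "\<dots> = (if \<forall>j<k. \<alpha> j \<le> \<beta> j then ?y (\<lambda>i. if i < k then \<beta> i - \<alpha> i else \<beta> i) else 0)"
    using Suc.IH[OF yV] Suc.prems by simp
  also have "\<dots> = (if \<forall>j<Suc k. \<alpha> j \<le> \<beta> j then y (\<lambda>i. if i < Suc k then \<beta> i - \<alpha> i else \<beta> i) else 0)"
  proof -
    have e: "(\<lambda>i. if i < k then \<beta> i - \<alpha> i else \<beta> i)(k := \<beta> k - \<alpha> k) = (\<lambda>i. if i < Suc k then \<beta> i - \<alpha> i else \<beta> i)"
      by (auto simp: less_Suc_eq)
    show ?thesis using Sh_pow[of k d y "\<alpha> k"] Suc.prems e by (auto simp: less_Suc_eq)
  qed
  finally show ?case .
qed

lemma mono_S_full: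
  assumes "y \<in> VV d" "\<alpha> \<in> multi_idx d"
  shows "mono_op (Sh d) \<alpha> d y \<beta> = (if \<alpha> \<le> \<beta> then y (\<beta> - \<alpha>) else 0)"
proof -
  have a: "\<And>i. d \<le> i \<Longrightarrow> \<alpha> i = 0" using assms(2) unfolding multi_idx_def by auto
  have "(\<forall>j<d. \<alpha> j \<le> \<beta> j) = (\<alpha> \<le> \<beta>)" unfolding le_fun_def using a
    by (metis not_le zero_le)
  moreover have "(\<lambda>i. if i < d then \<beta> i - \<alpha> i else \<beta> i) = \<beta> - \<alpha>"
    using a by (auto simp: fun_eq_iff)
  ultimately show ?thesis using mono_S[OF assms(1) order_refl] by simp
qed

context hs begin

lemma poly_S:
  assumes "y \<in> VV d" "is_poly d c"
  shows "poly_op d sm c (Sh d) y \<beta> = (\<Sum>\<alpha>\<in>{\<alpha>. c \<alpha> \<noteq> 0}. if \<alpha> \<le> \<beta> then sm (c \<alpha>) (y (\<beta> - \<alpha>)) else 0)"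
  unfolding poly_op_def
  by (intro sum.cong refl) (use assms in \<open>auto simp: mono_S_full is_poly_def\<close>)

end

lemma root_sum:
  assumes "a < L" "b < L"
  shows "(\<Sum>t<L. (cis (2*pi/L) ^ a * cnj (cis (2*pi/L)) ^ b) ^ t) = (if a = b then of_nat L else 0)"
proof -
  have L: "L > 0" using assms by auto
  define w where "w = cis (2*pi/L) ^ a * cnj (cis (2*pi/L)) ^ b"
  have w: "w = cis (2*pi*(real a - real b)/L)"
  proof -
    have "w = cis (real a * (2*pi/L)) * cis (real b * (-(2*pi/L)))" unfolding w_def by (simp only: Complex.DeMoivre cis_cnj)
    also have "\<dots> = cis (2*pi*(real a - real b)/L)" unfolding cis_mult
      by (rule arg_cong[where f=cis]) (simp add: diff_divide_distrib algebra_simps)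
    finally show ?thesis .
  qed
  have wL: "w ^ L = 1"
  proof -
    have "w ^ L = cis (real L * (2*pi*(real a - real b)/L))" unfolding w Complex.DeMoivre by simp
    also have "real L * (2*pi*(real a - real b)/L) = 2*pi*(real a - real b)" using L by simp
    finally have "w ^ L = cis (2*pi*(real a - real b))" .
    also have "cis (2*pi*(real a - real b)) = 1" using cis_multiple_2pi[of "real a - real b"] by (simp add: Ints_diff)
    finally show ?thesis .
  qed
  show ?thesis
  proof (cases "a = b")
    case True
    then have "w = 1" unfolding w by simp
    then show ?thesis using True unfolding w_def by simp
  next
    case False
    have "w \<noteq> 1"
    proof
      assume "w = 1"
      then have "exp (\<i> * complex_of_real (2*pi*(real a - real b)/L)) = 1" unfolding w cis_conv_exp by simp
      then obtain n :: int where n: "2*pi*(real a - real b)/L = of_int (2*n) * pi"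
        unfolding exp_eq_1 by auto
      then have e: "(2*pi) * (real a - real b) = (2*pi) * (of_int n * L)" using L by (simp add: field_simps)
      then have "real a - real b = of_int n * L" by (subst (asm) mult_cancel_left) simp
      then have "real_of_int (int a - int b) = real_of_int (n * int L)" by simp
      then have "int a - int b = n * int L" by (simp only: of_int_eq_iff)
      moreover have "\<bar>int a - int b\<bar> < int L" using assms by auto
      ultimately have "\<bar>n * int L\<bar> < 1 * int L" by simp
      then have "\<bar>n\<bar> * int L < 1 * int L" by (simp add: abs_mult)
      then have "\<bar>n\<bar> < 1" by (rule mult_right_less_imp_less) simp
      then have "n = 0" by simp
      then show False using \<open>int a - int b = n * int L\<close> False by simp
    qed
    then have "(\<Sum>t<L. w ^ t) = 0" using geometric_sum[OF \<open>w \<noteq> 1\<close>, of L] wL by simp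
    then show ?thesis using False unfolding w_def by simp
  qed
qed

definition zeta :: "nat \<Rightarrow> complex" where "zeta L = cis (2*pi/L)"
definition ch :: "nat \<Rightarrow> nat \<Rightarrow> (nat \<Rightarrow> nat) \<Rightarrow> (nat \<Rightarrow> nat) \<Rightarrow> complex" where
  "ch d L k \<gamma> = (\<Prod>j<d. zeta L ^ (k j * \<gamma> j))"
definition Box :: "nat \<Rightarrow> nat \<Rightarrow> (nat \<Rightarrow> nat) set" where
  "Box d L = {\<gamma>. \<forall>x. (x \<in> {..<d} \<longrightarrow> \<gamma> x \<in> {..<L}) \<and> (x \<notin> {..<d} \<longrightarrow> \<gamma> x = 0)}"
definition KK :: "nat \<Rightarrow> nat \<Rightarrow> (nat \<Rightarrow> nat) set" where
  "KK d L = PiE {..<d} (\<lambda>_. {..<L})"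
definition zpt :: "nat \<Rightarrow> nat \<Rightarrow> (nat \<Rightarrow> nat) \<Rightarrow> (nat \<Rightarrow> complex)" where
  "zpt d L k = (\<lambda>j. if j < d then zeta L ^ k j else 0)"

lemma finite_Box: "finite (Box d L)"
  unfolding Box_def by (rule finite_set_of_finite_funs) auto
lemma finite_KK: "finite (KK d L)"
  unfolding KK_def by (rule finite_PiE) auto
lemma Box_iff: "\<gamma> \<in> Box d L \<longleftrightarrow> (\<forall>j<d. \<gamma> j < L) \<and> (\<forall>j\<ge>d. \<gamma> j = 0)"
  unfolding Box_def by (simp add: not_less all_conj_distrib)
lemma Box_multi: "Box d L \<subseteq> multi_idx d"
  by (auto simp: Box_iff multi_idx_def)
lemma Box_mono:
  assumes "K \<le> L" shows "Box d K \<subseteq> Box d L"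
proof
  fix \<gamma> assume g: "\<gamma> \<in> Box d K"
  have "\<gamma> j < L" if j: "j < d" for j
  proof -
    have "\<gamma> j < K" using g j by (simp add: Box_iff)
    with assms show ?thesis by linarith
  qed
  then show "\<gamma> \<in> Box d L" using g by (simp add: Box_iff)
qed

lemma ch_cnj: "ch d L k \<gamma> * cnj (ch d L k \<gamma>') = (\<Prod>j<d. (zeta L ^ \<gamma> j * cnj (zeta L) ^ \<gamma>' j) ^ k j)"
  unfolding ch_def cnj_prod prod.distrib[symmetric]
  by (intro prod.cong refl) (simp add: power_mult_distrib power_mult[symmetric] mult.commute)

lemma ortho:
  assumes "\<gamma> \<in> Box d L" "\<gamma>' \<in> Box d L"
  shows "(\<Sum>k\<in>KK d L. ch d L k \<gamma> * cnj (ch d L k \<gamma>')) = (if \<gamma> = \<gamma>' then of_nat (L ^ d) else 0)"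
proof -
  have "(\<Sum>k\<in>KK d L. ch d L k \<gamma> * cnj (ch d L k \<gamma>')) =
        (\<Sum>k\<in>KK d L. \<Prod>j<d. (zeta L ^ \<gamma> j * cnj (zeta L) ^ \<gamma>' j) ^ k j)"
    by (simp add: ch_cnj)
  also have "\<dots> = (\<Prod>j<d. \<Sum>t<L. (zeta L ^ \<gamma> j * cnj (zeta L) ^ \<gamma>' j) ^ t)"
    unfolding KK_def by (rule prod_sum_PiE[symmetric]) auto
  also have "\<dots> = (\<Prod>j<d. if \<gamma> j = \<gamma>' j then of_nat L else 0)"
    using assms unfolding zeta_def Box_iff by (intro prod.cong refl root_sum) auto
  also have "\<dots> = (if \<gamma> = \<gamma>' then of_nat (L ^ d) else 0)"
  proof (cases "\<gamma> = \<gamma>'")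
    case True then show ?thesis by simp
  next
    case False
    then obtain j where j: "\<gamma> j \<noteq> \<gamma>' j" by auto
    have "j < d" using assms j unfolding Box_iff by (metis leI)
    with j show ?thesis using False by (intro trans[OF prod_zero]) auto
  qed
  finally show ?thesis .
qed

context hs begin

definition FT :: "nat \<Rightarrow> nat \<Rightarrow> ((nat \<Rightarrow> nat) \<Rightarrow> 'h) \<Rightarrow> (nat \<Rightarrow> nat) \<Rightarrow> 'h" where
  "FT d L f k = (\<Sum>\<gamma>\<in>Box d L. sm (ch d L k \<gamma>) (f \<gamma>))"

lemma parseval_c:
  "(\<Sum>k\<in>KK d L. ip (FT d L f k) (FT d L f k)) = of_nat (L ^ d) * (\<Sum>\<gamma>\<in>Box d L. ip (f \<gamma>) (f \<gamma>))"
proof -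
  have "(\<Sum>k\<in>KK d L. ip (FT d L f k) (FT d L f k)) =
     (\<Sum>k\<in>KK d L. \<Sum>\<gamma>\<in>Box d L. \<Sum>\<gamma>'\<in>Box d L. (ch d L k \<gamma> * cnj (ch d L k \<gamma>')) * ip (f \<gamma>) (f \<gamma>'))"
    unfolding FT_def ip_sum_left ip_sm_left ip_sum_right ip_sm_right sum_distrib_left
    by (rule sum.cong[OF refl], subst sum.swap) (simp add: mult_ac)
  also have "\<dots> = (\<Sum>\<gamma>\<in>Box d L. \<Sum>\<gamma>'\<in>Box d L. (\<Sum>k\<in>KK d L. ch d L k \<gamma> * cnj (ch d L k \<gamma>')) * ip (f \<gamma>) (f \<gamma>'))"
    by (simp add: sum_distrib_right sum.swap[of _ "KK d L"])
  also have "\<dots> = (\<Sum>\<gamma>\<in>Box d L. \<Sum>\<gamma>'\<in>Box d L. (if \<gamma> = \<gamma>' then of_nat (L ^ d) * ip (f \<gamma>) (f \<gamma>') else 0))"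
    by (intro sum.cong refl) (simp add: ortho)
  also have "\<dots> = of_nat (L ^ d) * (\<Sum>\<gamma>\<in>Box d L. ip (f \<gamma>) (f \<gamma>))"
    by (simp add: sum_distrib_left finite_Box)
  finally show ?thesis .
qed

lemma parseval:
  "(\<Sum>k\<in>KK d L. Re (ip (FT d L f k) (FT d L f k))) = real (L ^ d) * (\<Sum>\<gamma>\<in>Box d L. Re (ip (f \<gamma>) (f \<gamma>)))"
proof -
  have "(\<Sum>k\<in>KK d L. Re (ip (FT d L f k) (FT d L f k))) = Re (\<Sum>k\<in>KK d L. ip (FT d L f k) (FT d L f k))"
    by (simp add: Re_sum)
  also have "\<dots> = real (L ^ d) * (\<Sum>\<gamma>\<in>Box d L. Re (ip (f \<gamma>) (f \<gamma>)))"
    unfolding parseval_c by simp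
  finally show ?thesis .
qed

end

lemma ch_add: "ch d L k (\<alpha> + \<gamma>) = ch d L k \<alpha> * ch d L k \<gamma>"
  unfolding ch_def by (simp add: prod.distrib[symmetric] power_add distrib_left)

lemma poly_zpt: "poly_eval d c (zpt d L k) = (\<Sum>\<alpha>\<in>{\<alpha>. c \<alpha> \<noteq> 0}. c \<alpha> * ch d L k \<alpha>)"
  unfolding poly_eval_def zpt_def ch_def
  by (intro sum.cong refl arg_cong2[where f="(*)"] prod.cong) (auto simp: power_mult)

context hs begin

lemma FT_mult:
  assumes poly: "is_poly d c" and C: "{\<alpha>. c \<alpha> \<noteq> 0} \<subseteq> Box d K0"
    and y: "\<And>\<gamma>. \<gamma> \<notin> Box d K0 \<Longrightarrow> y \<gamma> = 0" and L: "2*K0 \<le> L"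
  shows "FT d L (\<lambda>\<beta>. \<Sum>\<alpha>\<in>{\<alpha>. c \<alpha> \<noteq> 0}. if \<alpha> \<le> \<beta> then sm (c \<alpha>) (y (\<beta> - \<alpha>)) else 0) k
       = sm (poly_eval d c (zpt d L k)) (FT d L y k)"
proof -
  let ?C = "{\<alpha>. c \<alpha> \<noteq> 0}"
  have finC: "finite ?C" using poly unfolding is_poly_def by auto
  have KL: "Box d K0 \<subseteq> Box d L" using L by (intro Box_mono) auto
  have FTy: "FT d L y k = (\<Sum>\<gamma>\<in>Box d K0. sm (ch d L k \<gamma>) (y \<gamma>))"
    unfolding FT_def by (rule sum.mono_neutral_right[OF finite_Box KL]) (auto simp: y)
  have inner: "(\<Sum>\<beta>\<in>Box d L. if \<alpha> \<le> \<beta> then sm (ch d L k \<beta> * c \<alpha>) (y (\<beta> - \<alpha>)) else 0)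
      = sm (c \<alpha> * ch d L k \<alpha>) (FT d L y k)" if a: "\<alpha> \<in> ?C" for \<alpha>
  proof -
    have aK: "\<alpha> \<in> Box d K0" using a C by auto
    have sub: "(+) \<alpha> ` Box d K0 \<subseteq> Box d L"
    proof
      fix \<beta> assume "\<beta> \<in> (+) \<alpha> ` Box d K0"
      then obtain \<gamma> where g: "\<gamma> \<in> Box d K0" "\<beta> = \<alpha> + \<gamma>" by auto
      have "a < K0 \<Longrightarrow> b < K0 \<Longrightarrow> a + b < L" for a b using L by linarith
      then show "\<beta> \<in> Box d L" using g aK unfolding Box_iff by (auto simp: plus_fun_def)
    qed
    have "(\<Sum>\<beta>\<in>Box d L. if \<alpha> \<le> \<beta> then sm (ch d L k \<beta> * c \<alpha>) (y (\<beta> - \<alpha>)) else 0)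
        = (\<Sum>\<beta>\<in>(+) \<alpha> ` Box d K0. sm (ch d L k \<beta> * c \<alpha>) (y (\<beta> - \<alpha>)))"
    proof (rule sum.mono_neutral_cong_right[OF finite_Box sub])
      show "\<forall>\<beta>\<in>Box d L - (+) \<alpha> ` Box d K0. (if \<alpha> \<le> \<beta> then sm (ch d L k \<beta> * c \<alpha>) (y (\<beta> - \<alpha>)) else 0) = 0"
      proof
        fix \<beta> assume b: "\<beta> \<in> Box d L - (+) \<alpha> ` Box d K0"
        show "(if \<alpha> \<le> \<beta> then sm (ch d L k \<beta> * c \<alpha>) (y (\<beta> - \<alpha>)) else 0) = 0"
        proof (cases "\<alpha> \<le> \<beta>")
          case True
          have "\<beta> = \<alpha> + (\<beta> - \<alpha>)" using True by (auto simp: fun_eq_iff le_fun_def)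
          then have "\<beta> - \<alpha> \<notin> Box d K0" using b by (metis DiffD2 image_eqI)
          then show ?thesis using True y by simp
        qed simp
      qed
      show "\<And>\<beta>. \<beta> \<in> (+) \<alpha> ` Box d K0 \<Longrightarrow> (if \<alpha> \<le> \<beta> then sm (ch d L k \<beta> * c \<alpha>) (y (\<beta> - \<alpha>)) else 0)
           = sm (ch d L k \<beta> * c \<alpha>) (y (\<beta> - \<alpha>))"
        by (auto simp: le_fun_def)
    qed
    also have "\<dots> = (\<Sum>\<gamma>\<in>Box d K0. sm (ch d L k (\<alpha> + \<gamma>) * c \<alpha>) (y \<gamma>))"
    proof (subst sum.reindex)
      show "inj_on ((+) \<alpha>) (Box d K0)" by (auto simp: inj_on_def fun_eq_iff)
      have "\<And>\<gamma>. \<alpha> + \<gamma> - \<alpha> = \<gamma>" by (auto simp: fun_eq_iff)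
      then show "(\<Sum>\<gamma>\<in>Box d K0. ((\<lambda>\<beta>. sm (ch d L k \<beta> * c \<alpha>) (y (\<beta> - \<alpha>))) \<circ> (+) \<alpha>) \<gamma>) =
          (\<Sum>\<gamma>\<in>Box d K0. sm (ch d L k (\<alpha> + \<gamma>) * c \<alpha>) (y \<gamma>))" by simp
    qed
    also have "\<dots> = sm (c \<alpha> * ch d L k \<alpha>) (\<Sum>\<gamma>\<in>Box d K0. sm (ch d L k \<gamma>) (y \<gamma>))"
      by (simp add: sm_sum_right sm_assoc ch_add mult_ac)
    finally show ?thesis using FTy by simp
  qed
  have "FT d L (\<lambda>\<beta>. \<Sum>\<alpha>\<in>?C. if \<alpha> \<le> \<beta> then sm (c \<alpha>) (y (\<beta> - \<alpha>)) else 0) k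
      = (\<Sum>\<beta>\<in>Box d L. \<Sum>\<alpha>\<in>?C. if \<alpha> \<le> \<beta> then sm (ch d L k \<beta> * c \<alpha>) (y (\<beta> - \<alpha>)) else 0)"
    unfolding FT_def sm_sum_right by (intro sum.cong refl) (auto simp: sm_assoc)
  also have "\<dots> = (\<Sum>\<alpha>\<in>?C. \<Sum>\<beta>\<in>Box d L. if \<alpha> \<le> \<beta> then sm (ch d L k \<beta> * c \<alpha>) (y (\<beta> - \<alpha>)) else 0)"
    by (rule sum.swap)
  also have "\<dots> = (\<Sum>\<alpha>\<in>?C. sm (c \<alpha> * ch d L k \<alpha>) (FT d L y k))"
    by (intro sum.cong refl inner) auto
  also have "\<dots> = sm (poly_eval d c (zpt d L k)) (FT d L y k)"
    unfolding poly_zpt sm_sum_left ..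
  finally show ?thesis .
qed

lemma fin_ineq:
  assumes poly: "is_poly d c" and C: "{\<alpha>. c \<alpha> \<noteq> 0} \<subseteq> Box d K0"
    and y: "\<And>\<gamma>. \<gamma> \<notin> Box d K0 \<Longrightarrow> y \<gamma> = 0" and L: "2*K0 \<le> L" "0 < L"
    and bound: "\<And>k. k \<in> KK d L \<Longrightarrow> cmod (poly_eval d c (zpt d L k)) \<le> M"
  defines "g \<equiv> (\<lambda>\<beta>. \<Sum>\<alpha>\<in>{\<alpha>. c \<alpha> \<noteq> 0}. if \<alpha> \<le> \<beta> then sm (c \<alpha>) (y (\<beta> - \<alpha>)) else 0)"
  shows "(\<Sum>\<beta>\<in>Box d L. Re (ip (g \<beta>) (g \<beta>))) \<le> M\<^sup>2 * (\<Sum>\<gamma>\<in>Box d L. Re (ip (y \<gamma>) (y \<gamma>)))"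
proof -
  have "real (L ^ d) * (\<Sum>\<beta>\<in>Box d L. Re (ip (g \<beta>) (g \<beta>))) = (\<Sum>k\<in>KK d L. Re (ip (FT d L g k) (FT d L g k)))"
    by (rule parseval[symmetric])
  also have "\<dots> = (\<Sum>k\<in>KK d L. (cmod (poly_eval d c (zpt d L k)))\<^sup>2 * Re (ip (FT d L y k) (FT d L y k)))"
  proof (intro sum.cong refl)
    fix k
    have "FT d L g k = sm (poly_eval d c (zpt d L k)) (FT d L y k)"
      unfolding g_def by (rule FT_mult[OF poly C y L(1)])
    then show "Re (ip (FT d L g k) (FT d L g k)) = (cmod (poly_eval d c (zpt d L k)))\<^sup>2 * Re (ip (FT d L y k) (FT d L y k))"
      by (simp add: nsq_sm)
  qed
  also have "\<dots> \<le> (\<Sum>k\<in>KK d L. M\<^sup>2 * Re (ip (FT d L y k) (FT d L y k)))"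
    using bound by (intro sum_mono mult_right_mono ip_nonneg power_mono) auto
  also have "\<dots> = real (L ^ d) * (M\<^sup>2 * (\<Sum>\<gamma>\<in>Box d L. Re (ip (y \<gamma>) (y \<gamma>))))"
    unfolding sum_distrib_left[symmetric] parseval by simp
  finally show ?thesis using L(2) by (simp add: mult_le_cancel_left_pos)
qed

end

context hs begin

lemma core:
  assumes poly: "is_poly d c" and yl: "y \<in> l2H d ip" and M: "0 \<le> M"
    and bound: "\<And>L k. 0 < L \<Longrightarrow> k \<in> KK d L \<Longrightarrow> cmod (poly_eval d c (zpt d L k)) \<le> M"
  shows "l2norm d ip (poly_op d sm c (Sh d) y) \<le> M * l2norm d ip y"
proof -
  let ?C = "{\<alpha>. c \<alpha> \<noteq> 0}"
  have finC: "finite ?C" and Cm: "?C \<subseteq> multi_idx d" using poly unfolding is_poly_def by auto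
  have yV: "y \<in> VV d" and ysum: "(\<lambda>\<alpha>. (hnorm ip (y \<alpha>))\<^sup>2) summable_on multi_idx d"
    using yl unfolding l2H_def VV_def by auto
  define g where "g = poly_op d sm c (Sh d) y"
  define Ny where "Ny = (\<Sum>\<^sub>\<infinity>\<alpha>\<in>multi_idx d. (hnorm ip (y \<alpha>))\<^sup>2)"
  have g: "g \<beta> = (\<Sum>\<alpha>\<in>?C. if \<alpha> \<le> \<beta> then sm (c \<alpha>) (y (\<beta> - \<alpha>)) else 0)" for \<beta>
    unfolding g_def by (rule poly_S[OF yV poly])
  have fin: "(\<Sum>\<beta>\<in>F. (hnorm ip (g \<beta>))\<^sup>2) \<le> M\<^sup>2 * Ny" if F: "finite F" "F \<subseteq> multi_idx d" for F
  proof -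
    define K0 where "K0 = Suc (\<Sum>\<beta>\<in>F \<union> ?C. \<Sum>j<d. \<beta> j)"
    have inK: "\<beta> \<in> Box d K0" if b: "\<beta> \<in> F \<union> ?C" for \<beta>
    proof -
      have "\<beta> j < K0" if j: "j < d" for j
      proof -
        have "\<beta> j \<le> (\<Sum>j<d. \<beta> j)" using j by (intro member_le_sum) auto
        also have "\<dots> \<le> (\<Sum>\<beta>\<in>F \<union> ?C. \<Sum>j<d. \<beta> j)" using b F finC by (intro member_le_sum) auto
        finally show ?thesis unfolding K0_def by simp
      qed
      moreover have "\<beta> \<in> multi_idx d" using b F Cm by auto
      ultimately show ?thesis unfolding Box_iff multi_idx_def by auto
    qed
    have K0: "0 < K0" unfolding K0_def by simp
    define y' where "y' = (\<lambda>\<gamma>. if \<gamma> \<in> Box d K0 then y \<gamma> else 0)"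
    define g' where "g' = (\<lambda>\<beta>. \<Sum>\<alpha>\<in>?C. if \<alpha> \<le> \<beta> then sm (c \<alpha>) (y' (\<beta> - \<alpha>)) else 0)"
    have gg: "g \<beta> = g' \<beta>" if b: "\<beta> \<in> F" for \<beta>
      unfolding g g'_def
    proof (intro sum.cong refl)
      fix \<alpha> assume a: "\<alpha> \<in> ?C"
      show "(if \<alpha> \<le> \<beta> then sm (c \<alpha>) (y (\<beta> - \<alpha>)) else 0) = (if \<alpha> \<le> \<beta> then sm (c \<alpha>) (y' (\<beta> - \<alpha>)) else 0)"
      proof (cases "\<alpha> \<le> \<beta>")
        case True
        have bK: "\<beta> \<in> Box d K0" using inK b by auto
        have "\<beta> - \<alpha> \<in> Box d K0" using bK unfolding Box_iff by (auto simp: le_less_trans[OF diff_le_self])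
        then show ?thesis by (simp add: y'_def)
      qed simp
    qed
    have "(\<Sum>\<beta>\<in>F. (hnorm ip (g \<beta>))\<^sup>2) = (\<Sum>\<beta>\<in>F. Re (ip (g' \<beta>) (g' \<beta>)))"
      by (intro sum.cong refl) (simp add: gg hnorm_sq)
    also have "\<dots> \<le> (\<Sum>\<beta>\<in>Box d (2*K0). Re (ip (g' \<beta>) (g' \<beta>)))"
    proof (rule sum_mono2[OF finite_Box])
      show "F \<subseteq> Box d (2*K0)" using inK Box_mono[of K0 "2*K0" d] by auto
    qed (simp add: ip_nonneg)
    also have "\<dots> \<le> M\<^sup>2 * (\<Sum>\<gamma>\<in>Box d (2*K0). Re (ip (y' \<gamma>) (y' \<gamma>)))"
      unfolding g'_def
    proof (rule fin_ineq[OF poly])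
      show "?C \<subseteq> Box d K0" using inK by auto
    qed (use K0 bound in \<open>auto simp: y'_def\<close>)
    also have "(\<Sum>\<gamma>\<in>Box d (2*K0). Re (ip (y' \<gamma>) (y' \<gamma>))) = (\<Sum>\<gamma>\<in>Box d K0. (hnorm ip (y \<gamma>))\<^sup>2)"
      by (rule sum.mono_neutral_cong_right[OF finite_Box Box_mono]) (auto simp: y'_def hnorm_sq)
    also have "\<dots> \<le> Ny" unfolding Ny_def
      by (rule finite_sum_le_infsum[OF ysum finite_Box Box_multi]) simp
    finally show ?thesis by (simp add: mult_left_mono)
  qed
  have sg: "(\<lambda>\<beta>. (hnorm ip (g \<beta>))\<^sup>2) summable_on multi_idx d"
    by (rule nonneg_bdd_above_summable_on) (use fin in \<open>auto intro!: bdd_aboveI\<close>)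
  have "(\<Sum>\<^sub>\<infinity>\<beta>\<in>multi_idx d. (hnorm ip (g \<beta>))\<^sup>2) \<le> M\<^sup>2 * Ny"
    by (rule infsum_le_finite_sums[OF sg fin])
  then have "l2norm d ip g \<le> sqrt (M\<^sup>2 * Ny)" unfolding l2norm_def by simp
  also have "\<dots> = M * l2norm d ip y" unfolding l2norm_def Ny_def using M by (simp add: real_sqrt_mult)
  finally show ?thesis unfolding g_def .
qed

end

lemma poly_bdd:
  assumes "is_poly d c"
  shows "bdd_above ((\<lambda>w. cmod (poly_eval d c w)) ` polydisc d)"
proof (rule bdd_aboveI)
  fix x assume "x \<in> (\<lambda>w. cmod (poly_eval d c w)) ` polydisc d"
  then obtain w where w: "w \<in> polydisc d" "x = cmod (poly_eval d c w)" by auto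
  have "x \<le> (\<Sum>\<alpha>\<in>{\<alpha>. c \<alpha> \<noteq> 0}. cmod (c \<alpha> * (\<Prod>j<d. w j ^ \<alpha> j)))"
    unfolding w poly_eval_def by (rule norm_sum)
  also have "\<dots> \<le> (\<Sum>\<alpha>\<in>{\<alpha>. c \<alpha> \<noteq> 0}. cmod (c \<alpha>))"
  proof (intro sum_mono)
    fix \<alpha>
    have "cmod (\<Prod>j<d. w j ^ \<alpha> j) = (\<Prod>j<d. cmod (w j) ^ \<alpha> j)" unfolding prod_norm[symmetric] norm_power ..
    also have "\<dots> \<le> 1" using w(1) unfolding polydisc_def
      by (intro prod_le_1) (auto intro!: power_le_one simp: less_imp_le)
    finally show "cmod (c \<alpha> * (\<Prod>j<d. w j ^ \<alpha> j)) \<le> cmod (c \<alpha>)"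
      by (simp add: norm_mult mult_left_le)
  qed
  finally show "x \<le> (\<Sum>\<alpha>\<in>{\<alpha>. c \<alpha> \<noteq> 0}. cmod (c \<alpha>))" .
qed

lemma torus_bound:
  assumes poly: "is_poly d c" and z1: "\<And>j. j < d \<Longrightarrow> cmod (z j) = 1" and z0: "\<And>j. d \<le> j \<Longrightarrow> z j = 0"
  shows "cmod (poly_eval d c z) \<le> (SUP w\<in>polydisc d. cmod (poly_eval d c w))"
proof -
  define r where "r = (\<lambda>n::nat. 1 - inverse (real (Suc n)))"
  have r0: "0 \<le> r n" "r n < 1" for n unfolding r_def by (auto simp: field_simps)
  have r1: "r \<longlonglongrightarrow> 1" unfolding r_def
    using tendsto_diff[OF tendsto_const LIMSEQ_inverse_real_of_nat] by simp
  define w where "w = (\<lambda>n j. complex_of_real (r n) * z j)"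
  have wP: "w n \<in> polydisc d" for n
    unfolding polydisc_def w_def using r0[of n] z1 z0 by (auto simp: norm_mult)
  have lim: "(\<lambda>n. poly_eval d c (w n)) \<longlonglongrightarrow> poly_eval d c z"
  proof -
    have "(\<lambda>n. \<Sum>\<alpha>\<in>{\<alpha>. c \<alpha> \<noteq> 0}. c \<alpha> * (\<Prod>j<d. (complex_of_real (r n) * z j) ^ \<alpha> j))
       \<longlonglongrightarrow> (\<Sum>\<alpha>\<in>{\<alpha>. c \<alpha> \<noteq> 0}. c \<alpha> * (\<Prod>j<d. (complex_of_real 1 * z j) ^ \<alpha> j))"
      by (intro tendsto_intros r1)
    then show ?thesis unfolding poly_eval_def w_def by simp
  qed
  show ?thesis
  proof (rule LIMSEQ_le_const2[OF tendsto_norm[OF lim]])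
    show "\<exists>N. \<forall>n\<ge>N. cmod (poly_eval d c (w n)) \<le> (SUP w\<in>polydisc d. cmod (poly_eval d c w))"
      using wP by (intro exI[of _ 0] allI impI cSUP_upper poly_bdd[OF poly]) auto
  qed
qed

theorem proposition3p3:
  fixes d :: nat
    and sm :: "complex \<Rightarrow> 'h::ab_group_add \<Rightarrow> 'h"
    and ip :: "'h \<Rightarrow> 'h \<Rightarrow> complex"
    and A :: "nat \<Rightarrow> (nat \<Rightarrow> nat) \<Rightarrow> 'h \<Rightarrow> 'h"
    and c :: "(nat \<Rightarrow> nat) \<Rightarrow> complex"
  assumes "0 < d"
    and "complex_hilbert_space sm ip"
    and "\<And>j \<alpha>. j < d \<Longrightarrow> \<alpha> \<in> multi_idx d \<Longrightarrow> unitary_op sm ip (A j \<alpha>)"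
    and "commuting_weights d ip A"
    and "is_poly d c"
  shows "\<forall>x\<in>l2H d ip.
           l2norm d ip (poly_op d sm c (multishift d A) x)
             \<le> (SUP z\<in>polydisc d. cmod (poly_eval d c z)) * l2norm d ip x"
proof -
  interpret hs sm ip by unfold_locales (rule assms(2))
  interpret setting d sm ip A
  proof unfold_locales
    show "\<And>j \<alpha>. j < d \<Longrightarrow> \<alpha> \<in> multi_idx d \<Longrightarrow> unitary_op sm ip (A j \<alpha>)" by (rule assms(3))
    show "\<And>\<alpha> i j. \<alpha> \<in> multi_idx d \<Longrightarrow> i < d \<Longrightarrow> j < d \<Longrightarrow>
        A i (\<alpha>(j := \<alpha> j + 1)) \<circ> A j \<alpha> = A j (\<alpha>(i := \<alpha> i + 1)) \<circ> A i \<alpha>"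
      using assms(4) unfolding commuting_weights_def by blast
  qed
  let ?M = "(SUP z\<in>polydisc d. cmod (poly_eval d c z))"
  have M0: "0 \<le> ?M"
  proof (rule cSUP_upper2[OF poly_bdd[OF assms(5)]])
    show "(\<lambda>_. 0) \<in> polydisc d" unfolding polydisc_def by simp
  qed simp
  have bound: "cmod (poly_eval d c (zpt d L k)) \<le> ?M" if "0 < L" "k \<in> KK d L" for L k
    by (rule torus_bound[OF assms(5)]) (auto simp: zpt_def zeta_def norm_power)
  show ?thesis
  proof
    fix x assume x: "x \<in> l2H d ip"
    obtain y where y: "Wm d A y = x" "y \<in> l2H d ip" "l2norm d ip y = l2norm d ip x"
      by (rule W_surj[OF x])
    show "l2norm d ip (poly_op d sm c (multishift d A) x) \<le> ?M * l2norm d ip x"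
      using l2norm_W[of c y] core[OF assms(5) y(2) M0 bound] y by simp
  qed
qed

end
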